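(* Let $t>0$, $x\in\mathbb{R}^d$, $n\ge1$ and $0<t_1<\dots<t_n<t$. For any $h=h_1\otimes\dots\otimes h_n$ with $h_i\in C_0^\infty(\mathbb{R}^d)$, $$(\mathcal{F}f_n(t_1,\cdot,\dots,t_n,\cdot,t,x),h)=\int_{\mathbb{R}^{nd}}h(\xi_1,\dots,\xi_n)e^{-i(\xi_1+\dots+\xi_n)\cdot x}\overline{\mathcal{F}G(t_2-t_1,\cdot)(\xi_1)}\,\overline{\mathcal{F}G(t_3-t_2,\cdot)(\xi_1+\xi_2)}\cdots\overline{\mathcal{F}G(t-t_n,\cdot)(\xi_1+\dots+\xi_n)}\,d\xi_1\cdots d\xi_n.$$ That is, the Fourier transform of $f_n(t_1,\cdot,\dots,t_n,\cdot,t,x)$ is the function $e^{-i(\xi_1+\dots+\xi_n)\cdot x}\prod_{j=1}^n\overline{\mathcal{F}G(t_{j+1}-t_j,\cdot)(\xi_1+\dots+\xi_j)}$ with $t_{n+1}=t$.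
   Context: $\mathcal{F}\phi(\xi)=\int_{\mathbb{R}^d}e^{-i\xi\cdot x}\phi(x)dx$, extended to $\mathcal{S}'$ by $(\mathcal{F}T,h)=(T,\mathcal{F}h)$. $G$ is the fundamental solution of the wave equation $\partial_t^2-\Delta$ on $\mathbb{R}^d$; for $s>0$, $G(s,\cdot)$ is a distribution of rapid decrease and $\mathcal{F}G(s,\cdot)(\xi)=\sin(s|\xi|)/|\xi|$; $*$ denotes convolution in the space variable. For $0<t_1<\dots<t_n<t$, $f_n(t_1,\cdot,\dots,t_n,\cdot,t,x)$ is the distribution on $\mathbb{R}^{nd}$ defined on test functions $\phi=\phi_1\otimes\dots\otimes\phi_n$ ($\phi_i\in\mathcal{S}(\mathbb{R}^d)$) by $(f_n(t_1,\cdot,\dots,t_n,\cdot,t,x),\phi)=\varphi_n(t_2-t_1,t_3-t_2,\dots,t-t_n,x)$, where recursively for $k=1,\dots,n$: $\psi_1=\phi_1$, $\psi_k(s_1,\dots,s_{k-1},\cdot)=\phi_k(\cdot)\varphi_{k-1}(s_1,\dots,s_{k-1},\cdot)$ for $k\ge2$, and $\varphi_k(s_1,\dots,s_k,\cdot)=\psi_k(s_1,\dots,s_{k-1},\cdot)*G(s_k,\cdot)$. *)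

theory Defs
  imports "HOL-Analysis.Analysis"
begin

text \<open>Space R^d is modelled by an arbitrary euclidean space 'a (d = DIM('a)).
  Functions / test functions are complex valued.\<close>

definition pderiv_dir :: "'a::euclidean_space \<Rightarrow> ('a \<Rightarrow> complex) \<Rightarrow> 'a \<Rightarrow> complex" where
  "pderiv_dir i f = (\<lambda>x. vector_derivative (\<lambda>t::real. f (x + t *\<^sub>R i)) (at 0))"

definition pderivs :: "'a::euclidean_space list \<Rightarrow> ('a \<Rightarrow> complex) \<Rightarrow> 'a \<Rightarrow> complex" where
  "pderivs is f = foldr pderiv_dir is f"

definition smooth_fn :: "('a::euclidean_space \<Rightarrow> complex) \<Rightarrow> bool" where
  "smooth_fn f \<longleftrightarrow> (\<forall>is. set is \<subseteq> Basis \<longrightarrow> (\<forall>x. pderivs is f differentiable (at x)))"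

definition schwartz :: "('a::euclidean_space \<Rightarrow> complex) \<Rightarrow> bool" where
  "schwartz f \<longleftrightarrow> smooth_fn f \<and>
     (\<forall>is. set is \<subseteq> Basis \<longrightarrow> (\<forall>m::nat. \<exists>C. \<forall>x. (1 + norm x) ^ m * norm (pderivs is f x) \<le> C))"

definition test_fn :: "('a::euclidean_space \<Rightarrow> complex) \<Rightarrow> bool" where
  "test_fn f \<longleftrightarrow> smooth_fn f \<and> compact (closure {x. f x \<noteq> 0})"

definition fourier :: "('a::euclidean_space \<Rightarrow> complex) \<Rightarrow> 'a \<Rightarrow> complex" where
  "fourier \<phi> = (\<lambda>\<xi>. \<integral>x. cis (- (\<xi> \<bullet> x)) * \<phi> x \<partial>lborel)"

text \<open>The function sin(s|xi|)/|xi| (= F G(s,.)).\<close>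
definition wave_hat :: "real \<Rightarrow> 'a::euclidean_space \<Rightarrow> real" where
  "wave_hat s \<xi> = sin (s * norm \<xi>) / norm \<xi>"

definition conv_dist :: "('a::euclidean_space \<Rightarrow> complex) \<Rightarrow> (('a \<Rightarrow> complex) \<Rightarrow> complex) \<Rightarrow> 'a \<Rightarrow> complex" where
  "conv_dist \<psi> T = (\<lambda>x. T (\<lambda>y. \<psi> (x - y)))"

text \<open>Recursion of the paper, 0-indexed: test functions phi 0..n-1 (paper phi_1..phi_n),
  time increments s 0..n-1 (paper s_1..s_n).
  wave_psi G phi s k is the paper's psi_{k+1}(s_1..s_k, .),
  wave_phi G phi s k is the paper's varphi_{k+1}(s_1..s_{k+1}, .).\<close>
fun wave_psi :: "(real \<Rightarrow> ('a::euclidean_space \<Rightarrow> complex) \<Rightarrow> complex) \<Rightarrow> (nat \<Rightarrow> 'a \<Rightarrow> complex)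
     \<Rightarrow> (nat \<Rightarrow> real) \<Rightarrow> nat \<Rightarrow> 'a \<Rightarrow> complex" where
  "wave_psi G \<phi> s 0 = \<phi> 0"
| "wave_psi G \<phi> s (Suc k) = (\<lambda>y. \<phi> (Suc k) y * conv_dist (wave_psi G \<phi> s k) (G (s k)) y)"

definition wave_phi :: "(real \<Rightarrow> ('a::euclidean_space \<Rightarrow> complex) \<Rightarrow> complex) \<Rightarrow> (nat \<Rightarrow> 'a \<Rightarrow> complex)
     \<Rightarrow> (nat \<Rightarrow> real) \<Rightarrow> nat \<Rightarrow> 'a \<Rightarrow> complex" where
  "wave_phi G \<phi> s k = conv_dist (wave_psi G \<phi> s k) (G (s k))"

text \<open>(f_n(t_1,.,...,t_n,.,t,x), phi_1 (x) ... (x) phi_n), with times tt 0..n-1 = t_1..t_n and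
  tt n = t.\<close>
definition f_pair :: "(real \<Rightarrow> ('a::euclidean_space \<Rightarrow> complex) \<Rightarrow> complex) \<Rightarrow> nat \<Rightarrow> (nat \<Rightarrow> real)
     \<Rightarrow> 'a \<Rightarrow> (nat \<Rightarrow> 'a \<Rightarrow> complex) \<Rightarrow> complex" where
  "f_pair G n tt x \<phi> = wave_phi G \<phi> (\<lambda>j. tt (Suc j) - tt j) (n - 1) x"

end

theory Submission
  imports Defs
begin
lemma pderivs_Nil[simp]: "pderivs [] f = f" by (simp add: pderivs_def)
lemma pderivs_Cons[simp]: "pderivs (i#is) f = pderiv_dir i (pderivs is f)" by (simp add: pderivs_def)
lemma pderivs_append: "pderivs (is@js) f = pderivs is (pderivs js f)" by (simp add: pderivs_def)

lemma pderiv_dir_has_derivative: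
  assumes "(f has_derivative D) (at x)"
  shows "pderiv_dir i f x = D i"
proof -
  have lin: "linear D" using assms has_derivative_linear by blast
  have "((\<lambda>t::real. x + t *\<^sub>R i) has_derivative (\<lambda>t. t *\<^sub>R i)) (at 0)"
    by (auto intro!: derivative_eq_intros)
  hence "((\<lambda>t::real. f (x + t *\<^sub>R i)) has_derivative (\<lambda>t. D (t *\<^sub>R i))) (at 0)"
    using has_derivative_compose[of "\<lambda>t::real. x + t *\<^sub>R i" "\<lambda>t. t *\<^sub>R i" 0 UNIV f D] assms
    by (simp add: o_def)
  hence "((\<lambda>t::real. f (x + t *\<^sub>R i)) has_vector_derivative D i) (at 0)"
    unfolding has_vector_derivative_def using lin by (simp add: linear_scale)
  thus ?thesis unfolding pderiv_dir_def by (simp add: vector_derivative_at)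
qed

lemma pderiv_dir_outside:
  assumes "x \<notin> closure {x. f x \<noteq> 0}"
  shows "pderiv_dir i f x = 0"
proof -
  have o: "open (- closure {x. f x \<noteq> 0})" by auto
  have xin: "x \<in> - closure {x. f x \<noteq> 0}" using assms by simp
  obtain e where e: "e > 0" "ball x e \<subseteq> - closure {x. f x \<noteq> 0}"
    using openE[OF o xin] by metis
  have z: "f x' = 0" if "dist x' x < e" for x'
  proof -
    have "x' \<in> ball x e" using that by (simp add: dist_commute)
    hence "x' \<in> - closure {x. f x \<noteq> 0}" using e(2) by (rule subsetD[rotated])
    hence "x' \<notin> closure {x. f x \<noteq> 0}" by simp
    hence "x' \<notin> {x. f x \<noteq> 0}" using closure_subset[of "{x. f x \<noteq> 0}"] by (rule contra_subsetD[rotated])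
    thus ?thesis by simp
  qed
  have "((\<lambda>_. 0) has_derivative (\<lambda>_. 0)) (at x)" by (rule has_derivative_const)
  hence "(f has_derivative (\<lambda>_. 0)) (at x)"
    by (rule has_derivative_transform_within[OF _ e(1)]) (auto simp: z)
  thus ?thesis by (simp add: pderiv_dir_has_derivative)
qed

definition supp :: "('a \<Rightarrow> complex) \<Rightarrow> 'a set" where "supp f = {x. f x \<noteq> 0}"

lemma test_fn_iff: "test_fn (f::'a::euclidean_space \<Rightarrow> complex) \<longleftrightarrow> smooth_fn f \<and> bounded {x. f x \<noteq> 0}"
  unfolding test_fn_def by (simp add: compact_closure)

lemma smooth_pderiv_dir:
  assumes "smooth_fn f" "i \<in> Basis" shows "smooth_fn (pderiv_dir i f)"
  unfolding smooth_fn_def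
proof (intro allI impI)
  fix "is" :: "'a list" and x assume "set is \<subseteq> Basis"
  hence "set (is @ [i]) \<subseteq> Basis" using assms(2) by simp
  from assms(1)[unfolded smooth_fn_def, rule_format, OF this]
  show "pderivs is (pderiv_dir i f) differentiable at x"
    by (simp add: pderivs_append)
qed

lemma smooth_pderivs:
  assumes "smooth_fn f" "set is \<subseteq> Basis" shows "smooth_fn (pderivs is f)"
  using assms proof (induction "is")
  case (Cons i "is") thus ?case using smooth_pderiv_dir[of "pderivs is f" i] by simp
qed simp

lemma smooth_differentiable: "smooth_fn f \<Longrightarrow> f differentiable at x"
proof -
  assume a: "smooth_fn f"
  have "set ([]::'a list) \<subseteq> Basis" by simp
  hence "pderivs [] f differentiable at x" using a[unfolded smooth_fn_def, rule_format, of "[]" x] by simp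
  thus ?thesis by simp
qed

lemma supp_pderiv_dir: "{x. pderiv_dir i f x \<noteq> 0} \<subseteq> closure {x. f x \<noteq> 0}"
proof
  fix x assume "x \<in> {x. pderiv_dir i f x \<noteq> 0}"
  thus "x \<in> closure {x. f x \<noteq> 0}" using pderiv_dir_outside[of x f i] by auto
qed

lemma test_pderiv_dir:
  assumes "test_fn f" "i \<in> Basis" shows "test_fn (pderiv_dir i f)"
proof -
  have "bounded {x. f x \<noteq> 0}" "smooth_fn f" using assms(1) test_fn_iff by auto
  hence "bounded {x. pderiv_dir i f x \<noteq> 0}"
    using bounded_subset[OF bounded_closure supp_pderiv_dir] by blast
  thus ?thesis using smooth_pderiv_dir[OF \<open>smooth_fn f\<close> assms(2)] test_fn_iff by blast
qed

lemma test_pderivs: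
  assumes "test_fn f" "set is \<subseteq> Basis" shows "test_fn (pderivs is f)"
  using assms proof (induction "is")
  case (Cons i "is") thus ?case using test_pderiv_dir[of "pderivs is f" i] by simp
qed simp

lemma smooth_continuous: "smooth_fn f \<Longrightarrow> continuous_on UNIV f"
proof -
  assume a: "smooth_fn f"
  have "f differentiable_on UNIV" using smooth_differentiable[OF a] by (simp add: differentiable_on_def)
  thus ?thesis by (rule differentiable_imp_continuous_on)
qed

lemma test_bounded:
  assumes "test_fn f" shows "\<exists>B. \<forall>x. norm (f x) \<le> B"
proof -
  let ?K = "closure {x. f x \<noteq> 0}"
  have K: "compact ?K" using assms unfolding test_fn_def by auto
  have "compact (f ` ?K)"
    using compact_continuous_image[OF continuous_on_subset[OF smooth_continuous] K] assms
    unfolding test_fn_def by auto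
  hence "bounded (f ` ?K)" by (rule compact_imp_bounded)
  then obtain B where B: "\<forall>y\<in>f ` ?K. norm y \<le> B" unfolding bounded_iff by auto
  have "norm (f x) \<le> max B 0" for x
  proof (cases "x \<in> ?K")
    case True thus ?thesis using B by force
  next
    case False hence "x \<notin> {x. f x \<noteq> 0}" using closure_subset[of "{x. f x \<noteq> 0}"] by (rule contra_subsetD[rotated])
    hence "f x = 0" by simp
    thus ?thesis by simp
  qed
  thus ?thesis by blast
qed

lemma test_supp_ball:
  assumes "test_fn f" shows "\<exists>R. \<forall>x. f x \<noteq> 0 \<longrightarrow> norm x \<le> R"
  using assms unfolding test_fn_iff bounded_iff by auto

lemma test_schwartz:
  assumes "test_fn f" shows "schwartz f"
  unfolding schwartz_def
proof (intro conjI allI impI)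
  show "smooth_fn f" using assms test_fn_def by blast
  fix "is" :: "'a list" and m :: nat assume "set is \<subseteq> Basis"
  hence t: "test_fn (pderivs is f)" using test_pderivs assms by blast
  obtain B where B: "\<forall>x. norm (pderivs is f x) \<le> B" using test_bounded[OF t] by blast
  obtain R where R: "\<forall>x. pderivs is f x \<noteq> 0 \<longrightarrow> norm x \<le> R" using test_supp_ball[OF t] by blast
  have "(1 + norm x) ^ m * norm (pderivs is f x) \<le> (1 + max R 0) ^ m * max B 0" for x
  proof (cases "pderivs is f x = 0")
    case True thus ?thesis by simp
  next
    case False
    hence "norm x \<le> max R 0" using R by force
    have "norm (pderivs is f x) \<le> max B 0" using B by (meson max.coboundedI1)
    thus ?thesis using \<open>norm x \<le> max R 0\<close> by (intro mult_mono power_mono) auto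
  qed
  thus "\<exists>C. \<forall>x. (1 + norm x) ^ m * norm (pderivs is f x) \<le> C" by blast
qed

lemma pderiv_dir_add:
  assumes "f differentiable at x" "g differentiable at x"
  shows "pderiv_dir i (\<lambda>x. f x + g x) x = pderiv_dir i f x + pderiv_dir i g x"
proof -
  obtain Df where Df: "(f has_derivative Df) (at x)" using assms(1) differentiable_def by blast
  obtain Dg where Dg: "(g has_derivative Dg) (at x)" using assms(2) differentiable_def by blast
  have "((\<lambda>x. f x + g x) has_derivative (\<lambda>h. Df h + Dg h)) (at x)" using Df Dg by (rule has_derivative_add)
  from pderiv_dir_has_derivative[OF this] pderiv_dir_has_derivative[OF Df] pderiv_dir_has_derivative[OF Dg]
  show ?thesis by simp
qed

lemma pderiv_dir_mult:
  fixes f g :: "'a::euclidean_space \<Rightarrow> complex"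
  assumes "f differentiable at x" "g differentiable at x"
  shows "pderiv_dir i (\<lambda>x. f x * g x) x = pderiv_dir i f x * g x + f x * pderiv_dir i g x"
proof -
  obtain Df where Df: "(f has_derivative Df) (at x)" using assms(1) differentiable_def by blast
  obtain Dg where Dg: "(g has_derivative Dg) (at x)" using assms(2) differentiable_def by blast
  have "((\<lambda>x. f x * g x) has_derivative (\<lambda>h. f x * Dg h + Df h * g x)) (at x)"
    using Df Dg by (rule has_derivative_mult)
  from pderiv_dir_has_derivative[OF this] pderiv_dir_has_derivative[OF Df] pderiv_dir_has_derivative[OF Dg]
  show ?thesis by (simp add: mult.commute)
qed

lemma pderivs_add:
  fixes u v :: "'a::euclidean_space \<Rightarrow> complex"
  assumes "\<And>js x. length js < length is \<Longrightarrow> set js \<subseteq> Basis \<Longrightarrow>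
             pderivs js u differentiable at x \<and> pderivs js v differentiable at x"
    and "set is \<subseteq> Basis"
  shows "pderivs is (\<lambda>x. u x + v x) = (\<lambda>x. pderivs is u x + pderivs is v x)"
  using assms
proof (induction "is")
  case Nil thus ?case by simp
next
  case (Cons i "is")
  have IH: "pderivs is (\<lambda>x. u x + v x) = (\<lambda>x. pderivs is u x + pderivs is v x)"
    using Cons.prems by (intro Cons.IH) auto
  have d: "pderivs is u differentiable at x \<and> pderivs is v differentiable at x" for x
    using Cons.prems by auto
  show ?case
    by (rule ext) (simp add: IH pderiv_dir_add d)
qed

lemma smooth_mult_aux:
  shows "\<forall>(is::'a::euclidean_space list) (f::'a \<Rightarrow> complex) g. length is = n \<longrightarrow> set is \<subseteq> Basis \<longrightarrow> smooth_fn f \<longrightarrow> smooth_fn g \<longrightarrow>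
     (\<forall>x. pderivs is (\<lambda>x. f x * g x) differentiable at x)"
proof (induction n rule: less_induct)
  case (less n)
  show ?case
  proof (intro allI impI)
    fix "is" :: "'a list" and f g :: "'a \<Rightarrow> complex" and x
    assume len: "length is = n" and B: "set is \<subseteq> Basis" and sf: "smooth_fn f" and sg: "smooth_fn g"
    show "pderivs is (\<lambda>x. f x * g x) differentiable at x"
    proof (cases "is" rule: rev_exhaust)
      case Nil thus ?thesis by (simp add: differentiable_mult smooth_differentiable[OF sf] smooth_differentiable[OF sg])
    next
      case (snoc js i)
      have i: "i \<in> Basis" and js: "set js \<subseteq> Basis" using B unfolding snoc by simp_all
      have ljs: "length js < n" using len snoc by simp
      have e: "pderiv_dir i (\<lambda>x. f x * g x) = (\<lambda>x. pderiv_dir i f x * g x + f x * pderiv_dir i g x)"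
        by (rule ext, rule pderiv_dir_mult[OF smooth_differentiable[OF sf] smooth_differentiable[OF sg]])
      have s1: "smooth_fn (pderiv_dir i f)" "smooth_fn (pderiv_dir i g)"
        using sf sg i smooth_pderiv_dir by auto
      have IH: "pderivs ks (\<lambda>x. f x * g x) differentiable at x"
        if "length ks < n" "set ks \<subseteq> Basis" "smooth_fn f" "smooth_fn g" for ks :: "'a list" and f g :: "'a \<Rightarrow> complex" and x :: 'a
      proof -
        note H = less.IH[OF that(1)]
        show ?thesis using H[rule_format, of ks f g, OF refl that(2) that(3) that(4)] by simp
      qed
      have add: "pderivs js (\<lambda>x. pderiv_dir i f x * g x + f x * pderiv_dir i g x) =
        (\<lambda>x. pderivs js (\<lambda>x. pderiv_dir i f x * g x) x + pderivs js (\<lambda>x. f x * pderiv_dir i g x) x)"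
      proof (rule pderivs_add[OF _ js])
        fix ks :: "'a list" and x assume a: "length ks < length js" and b: "set ks \<subseteq> Basis"
        have l: "length ks < n" using a ljs by linarith
        show "pderivs ks (\<lambda>x. pderiv_dir i f x * g x) differentiable at x \<and>
              pderivs ks (\<lambda>x. f x * pderiv_dir i g x) differentiable at x"
          using IH[OF l b s1(1) sg] IH[OF l b sf s1(2)] by (rule conjI)
      qed
      have "pderivs is (\<lambda>x. f x * g x) = pderivs js (\<lambda>x. pderiv_dir i f x * g x + f x * pderiv_dir i g x)"
        using snoc e by (simp add: pderivs_append)
      also have "\<dots> = (\<lambda>x. pderivs js (\<lambda>x. pderiv_dir i f x * g x) x + pderivs js (\<lambda>x. f x * pderiv_dir i g x) x)"
        by (rule add)
      finally show ?thesis
        using IH[OF ljs js s1(1) sg] IH[OF ljs js sf s1(2)] by simp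
    qed
  qed
qed

lemma smooth_mult:
  fixes f g :: "'a::euclidean_space \<Rightarrow> complex"
  assumes "smooth_fn f" "smooth_fn g" shows "smooth_fn (\<lambda>x. f x * g x)"
  unfolding smooth_fn_def
proof (intro allI impI)
  fix "is" :: "'a list" and x assume B: "set is \<subseteq> Basis"
  show "pderivs is (\<lambda>x. f x * g x) differentiable at x"
    using smooth_mult_aux[of "length is", rule_format, OF refl B assms(1) assms(2)] by simp
qed

lemma test_mult:
  fixes f g :: "'a::euclidean_space \<Rightarrow> complex"
  assumes "smooth_fn f" "test_fn g" shows "test_fn (\<lambda>x. f x * g x)"
proof -
  have b: "bounded {x. g x \<noteq> 0}" and "smooth_fn g" using assms(2) test_fn_iff by auto
  have "{x. f x * g x \<noteq> 0} \<subseteq> {x. g x \<noteq> 0}" by auto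
  with b have "bounded {x. f x * g x \<noteq> 0}" by (rule bounded_subset)
  thus ?thesis unfolding test_fn_iff using smooth_mult[OF assms(1) \<open>smooth_fn g\<close>] by simp
qed

lemma cis_inner_has_derivative:
  "((\<lambda>u. c * cis (u \<bullet> y)) has_derivative (\<lambda>h. c * ((h \<bullet> y) *\<^sub>R (\<i> * cis (u \<bullet> y))))) (at u)"
  by (auto intro!: derivative_eq_intros)

lemma pderivs_cis:
  fixes y :: "'a::euclidean_space"
  shows "pderivs is (\<lambda>u. c * cis (u \<bullet> y)) = (\<lambda>u. (c * (\<Prod>i\<leftarrow>is. \<i> * of_real (i \<bullet> y))) * cis (u \<bullet> y))"
proof (induction "is")
  case Nil thus ?case by simp
next
  case (Cons i "is")
  let ?C = "c * (\<Prod>i\<leftarrow>is. \<i> * of_real (i \<bullet> y))"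
  have "pderiv_dir i (\<lambda>u. ?C * cis (u \<bullet> y)) u = ?C * ((i \<bullet> y) *\<^sub>R (\<i> * cis (u \<bullet> y)))" for u
    by (rule pderiv_dir_has_derivative[OF cis_inner_has_derivative])
  thus ?case
    by (intro ext) (simp only: pderivs_Cons Cons.IH, simp add: scaleR_conv_of_real algebra_simps)
qed

lemma smooth_cis: "smooth_fn (\<lambda>u. cis (u \<bullet> (y::'a::euclidean_space)))"
  unfolding smooth_fn_def
proof (intro allI impI)
  fix "is" :: "'a list" and x
  have "pderivs is (\<lambda>u. cis (u \<bullet> y)) = pderivs is (\<lambda>u. 1 * cis (u \<bullet> y))" by simp
  also have "\<dots> = (\<lambda>u. (1 * (\<Prod>i\<leftarrow>is. \<i> * of_real (i \<bullet> y))) * cis (u \<bullet> y))" by (rule pderivs_cis)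
  finally show "pderivs is (\<lambda>u. cis (u \<bullet> y)) differentiable at x"
    unfolding differentiable_def by (metis cis_inner_has_derivative)
qed

lemma pderiv_dir_reflect:
  assumes "f differentiable at (-x)"
  shows "pderiv_dir i (\<lambda>u. c * f (-u)) x = - c * pderiv_dir i f (-x)"
proof -
  obtain Df where Df: "(f has_derivative Df) (at (-x))" using assms differentiable_def by blast
  have "((\<lambda>u. -u) has_derivative (\<lambda>h. -h)) (at x)" by (auto intro!: derivative_eq_intros)
  hence "((\<lambda>u. f (-u)) has_derivative (\<lambda>h. Df (-h))) (at x)"
    using has_derivative_compose[of "\<lambda>u. -u" "\<lambda>h. -h" x UNIV f Df] Df by (simp add: o_def)
  hence "((\<lambda>u. c * f (-u)) has_derivative (\<lambda>h. c * Df (-h))) (at x)"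
    by (rule has_derivative_mult_right)
  moreover have "Df (-i) = - Df i" using has_derivative_linear[OF Df] linear_neg by blast
  ultimately show ?thesis using Df by (simp add: pderiv_dir_has_derivative)
qed

lemma pderivs_reflect:
  assumes "smooth_fn f" "set is \<subseteq> Basis"
  shows "pderivs is (\<lambda>u. f (-u)) = (\<lambda>u. (-1) ^ length is * pderivs is f (-u))"
  using assms(2)
proof (induction "is")
  case Nil thus ?case by simp
next
  case (Cons i "is")
  have d: "pderivs is f differentiable at z" for z
    using smooth_pderivs[OF assms(1)] Cons.prems smooth_differentiable by auto
  show ?case using Cons by (intro ext) (simp add: pderiv_dir_reflect[OF d])
qed

lemma smooth_reflect:
  assumes "smooth_fn f" shows "smooth_fn (\<lambda>u. f (-u))"
  unfolding smooth_fn_def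
proof (intro allI impI)
  fix "is" :: "'a list" and x assume B: "set is \<subseteq> Basis"
  have d: "pderivs is f differentiable at z" for z
    using smooth_pderivs[OF assms(1) B] smooth_differentiable by auto
  have "(\<lambda>u. pderivs is f (-u)) differentiable at x"
    by (rule differentiable_compose[OF d]) (auto intro!: derivative_intros)
  thus "pderivs is (\<lambda>u. f (-u)) differentiable at x"
    unfolding pderivs_reflect[OF assms B] by simp
qed

lemma test_reflect:
  assumes "test_fn f" shows "test_fn (\<lambda>u. f (-u))"
proof -
  have b: "bounded {x. f x \<noteq> 0}" "smooth_fn f" using assms test_fn_iff by auto
  have "{x. f (-x) \<noteq> 0} \<subseteq> uminus ` {x. f x \<noteq> 0}"
  proof
    fix x assume "x \<in> {x. f (-x) \<noteq> 0}"
    hence "-x \<in> {x. f x \<noteq> 0}" by simp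
    hence "- (-x) \<in> uminus ` {x. f x \<noteq> 0}" by (rule imageI)
    thus "x \<in> uminus ` {x. f x \<noteq> 0}" by simp
  qed
  moreover have "bounded (uminus ` {x. f x \<noteq> 0})" using b(1) by simp
  ultimately have "bounded {x. f (-x) \<noteq> 0}" using bounded_subset by blast
  thus ?thesis using smooth_reflect[OF b(2)] test_fn_iff by blast
qed

definition Dg :: "('a::euclidean_space \<Rightarrow> complex) \<Rightarrow> 'a \<Rightarrow> 'a \<Rightarrow> complex" where
  "Dg g u = (\<lambda>v. \<Sum>b\<in>Basis. (v \<bullet> b) *\<^sub>R pderiv_dir b g u)"

lemma Dg_has_derivative_self: "(Dg g u has_derivative Dg g u) (at v within S)"
  unfolding Dg_def by (auto intro!: derivative_eq_intros)

lemma bounded_linear_Dg: "bounded_linear (Dg g u)"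
  using Dg_has_derivative_self has_derivative_bounded_linear by blast

lemma smooth_has_derivative:
  assumes "smooth_fn g" shows "(g has_derivative Dg g u) (at u)"
proof -
  obtain D where D: "(g has_derivative D) (at u)" using smooth_differentiable[OF assms] differentiable_def by blast
  have lin: "linear D" using has_derivative_linear[OF D] .
  have "D v = Dg g u v" for v
  proof -
    have "D v = D (\<Sum>b\<in>Basis. (v \<bullet> b) *\<^sub>R b)" by (simp add: euclidean_representation)
    also have "\<dots> = (\<Sum>b\<in>Basis. (v \<bullet> b) *\<^sub>R D b)" by (simp add: linear_sum[OF lin] linear_scale[OF lin])
    also have "\<dots> = Dg g u v" unfolding Dg_def using pderiv_dir_has_derivative[OF D] by simp
    finally show ?thesis .
  qed
  hence "D = Dg g u" by (rule ext)
  thus ?thesis using D by simp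
qed

lemma test_unif_cont:
  assumes "test_fn g" "e > 0"
  shows "\<exists>d>0. \<forall>u v. dist u v < d \<longrightarrow> norm (g u - g v) < e"
proof -
  obtain R where R: "\<forall>x. g x \<noteq> 0 \<longrightarrow> norm x \<le> R" using test_supp_ball[OF assms(1)] by blast
  let ?K = "cball (0::'a) (R + 1)"
  have "continuous_on ?K g"
    using smooth_continuous assms(1) test_fn_def continuous_on_subset by blast
  hence "uniformly_continuous_on ?K g" by (rule compact_uniformly_continuous) simp
  then obtain d0 where d0: "d0 > 0" "\<forall>u\<in>?K. \<forall>v\<in>?K. dist v u < d0 \<longrightarrow> dist (g v) (g u) < e"
    unfolding uniformly_continuous_on_def using assms(2) by metis
  have "dist u v < min d0 1 \<longrightarrow> norm (g u - g v) < e" for u v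
  proof
    assume duv: "dist u v < min d0 1"
    show "norm (g u - g v) < e"
    proof (cases "u \<in> ?K \<and> v \<in> ?K")
      case True thus ?thesis using d0(2) duv by (auto simp: dist_norm)
    next
      case False
      have tri: "norm u \<le> norm v + dist u v" "norm v \<le> norm u + dist u v"
        using norm_triangle_ineq2[of u v] norm_triangle_ineq2[of v u]
        by (auto simp: dist_norm norm_minus_commute)
      from False have "norm u > R + 1 \<or> norm v > R + 1" by auto
      hence "norm u > R \<and> norm v > R" using tri duv by auto
      hence "g u = 0" "g v = 0" using R by force+
      thus ?thesis using assms(2) by simp
    qed
  qed
  thus ?thesis by (intro exI[of _ "min d0 1"]) (use d0 in auto)
qed

lemma finite_unif:
  assumes "finite B" "\<And>b. b \<in> B \<Longrightarrow> \<exists>d::real>0. P b d"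
    and "\<And>b d d'. P b d \<Longrightarrow> 0 < d' \<Longrightarrow> d' \<le> d \<Longrightarrow> P b d'"
  shows "\<exists>d::real>0. \<forall>b\<in>B. P b d"
  using assms(1,2)
proof (induction B rule: finite_induct)
  case empty show ?case by (rule exI[of _ 1]) simp
next
  case (insert x F)
  obtain d1 where d1: "d1 > 0" "\<forall>b\<in>F. P b d1" using insert by auto
  obtain d2 where d2: "d2 > 0" "P x d2" using insert.prems by auto
  show ?case
    by (rule exI[of _ "min d1 d2"]) (use d1 d2 assms(3) in auto)
qed

lemma test_unif_deriv:
  assumes "test_fn g" "e > 0"
  shows "\<exists>d>0. \<forall>u h. norm h < d \<longrightarrow> norm (g (u + h) - g u - Dg g u h) \<le> e * norm h"
proof -
  define N where "N = real (card (Basis::'a set))"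
  have N: "N > 0" unfolding N_def by simp
  have "\<exists>d>0. \<forall>b\<in>(Basis::'a set). \<forall>u v. dist u v < d \<longrightarrow> norm (pderiv_dir b g u - pderiv_dir b g v) < e / N"
  proof (rule finite_unif)
    fix b :: 'a assume "b \<in> Basis"
    thus "\<exists>d>0. \<forall>u v. dist u v < d \<longrightarrow> norm (pderiv_dir b g u - pderiv_dir b g v) < e / N"
      using test_unif_cont[OF test_pderiv_dir[OF assms(1)]] assms(2) N by simp
  qed auto
  then obtain d where d0: "d > 0" and
    d1: "\<forall>b\<in>(Basis::'a set). \<forall>u v. dist u v < d \<longrightarrow> norm (pderiv_dir b g u - pderiv_dir b g v) < e / N"
    by blast
  have d: "d > 0"
    "\<And>b u v. b \<in> Basis \<Longrightarrow> dist u v < d \<Longrightarrow> norm (pderiv_dir b g u - pderiv_dir b g v) < e / N"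
    using d0 d1 by auto
  have sm: "smooth_fn g" using assms(1) test_fn_def by blast
  have "norm (g (u + h) - g u - Dg g u h) \<le> e * norm h" if h: "norm h < d" for u h
  proof -
    let ?F = "\<lambda>v. g v - Dg g u v"
    let ?F' = "\<lambda>v k. Dg g v k - Dg g u k"
    have der: "(?F has_derivative ?F' v) (at v within ball u d)" for v
      by (rule has_derivative_diff[OF has_derivative_at_withinI[OF smooth_has_derivative[OF sm]] Dg_has_derivative_self])
    have on: "onorm (?F' v) \<le> e" if v: "v \<in> ball u d" for v
    proof (rule onorm_le)
      fix k :: 'a
      have "?F' v k = (\<Sum>b\<in>Basis. (k \<bullet> b) *\<^sub>R (pderiv_dir b g v - pderiv_dir b g u))"
        unfolding Dg_def by (simp add: sum_subtractf scaleR_diff_right)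
      also have "norm \<dots> \<le> (\<Sum>b\<in>(Basis::'a set). norm k * (e / N))"
      proof (rule order_trans[OF norm_sum sum_mono])
        fix b :: 'a assume b: "b \<in> Basis"
        have "norm (pderiv_dir b g v - pderiv_dir b g u) < e / N"
          using d(2)[OF b, of v u] v by (simp add: dist_commute)
        moreover have "\<bar>k \<bullet> b\<bar> \<le> norm k" using Basis_le_norm[OF b] .
        ultimately have "\<bar>k \<bullet> b\<bar> * norm (pderiv_dir b g v - pderiv_dir b g u) \<le> norm k * (e / N)"
          by (intro mult_mono) auto
        thus "norm ((k \<bullet> b) *\<^sub>R (pderiv_dir b g v - pderiv_dir b g u)) \<le> norm k * (e / N)"
          by simp
      qed
      also have "\<dots> = e * norm k" using N unfolding N_def by simp
      finally show "norm (?F' v k) \<le> e * norm k" .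
    qed
    have "norm (?F (u + h) - ?F u) \<le> e * norm (u + h - u)"
      by (rule differentiable_bound[OF convex_ball der on]) (use h d(1) in \<open>auto simp: dist_norm\<close>)
    moreover have "?F (u + h) - ?F u = g (u + h) - g u - Dg g u h"
      using linear_add[OF bounded_linear.linear[OF bounded_linear_Dg], of g u u h] by simp
    ultimately show ?thesis by simp
  qed
  thus ?thesis using d(1) by (intro exI[of _ d]) auto
qed

lemma test_borel: "test_fn g \<Longrightarrow> g \<in> borel_measurable borel"
  by (rule borel_measurable_continuous_onI) (use smooth_continuous test_fn_def in blast)

lemma integrable_mult_bounded:
  fixes w f :: "'m \<Rightarrow> complex"
  assumes "integrable M w" "f \<in> borel_measurable M" "\<And>m. norm (f m) \<le> B"
  shows "integrable M (\<lambda>m. w m * f m)"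
proof (rule Bochner_Integration.integrable_bound[where f="\<lambda>m. B *\<^sub>R w m"])
  show "integrable M (\<lambda>m. B *\<^sub>R w m)" using assms(1) by simp
  have w: "w \<in> borel_measurable M" using assms(1) by auto
  show "(\<lambda>m. w m * f m) \<in> borel_measurable M" using w assms(2) by measurable
  show "AE m in M. norm (w m * f m) \<le> norm (B *\<^sub>R w m)"
  proof (rule AE_I2)
    fix m
    have "norm (w m * f m) = norm (f m) * norm (w m)" by (simp add: norm_mult)
    also have "\<dots> \<le> \<bar>B\<bar> * norm (w m)" using assms(3)[of m] by (intro mult_right_mono) auto
    finally show "norm (w m * f m) \<le> norm (B *\<^sub>R w m)" by simp
  qed
qed

locale cvs =
  fixes M :: "'m measure" and w :: "'m \<Rightarrow> complex" and b :: "'m \<Rightarrow> 'a::euclidean_space"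
  assumes w_int: "integrable M w" and b_meas[measurable]: "b \<in> borel_measurable M"
begin

definition cv :: "('a \<Rightarrow> complex) \<Rightarrow> 'a \<Rightarrow> complex" where
  "cv g \<eta> = (\<integral>m. w m * g (\<eta> - b m) \<partial>M)"

lemma meas_test: "test_fn g \<Longrightarrow> (\<lambda>m. g (\<eta> - b m)) \<in> borel_measurable M"
proof -
  assume t: "test_fn g"
  note [measurable] = test_borel[OF t]
  show ?thesis by measurable
qed

lemma int_test: "test_fn g \<Longrightarrow> integrable M (\<lambda>m. w m * g (\<eta> - b m))"
proof -
  assume t: "test_fn g"
  obtain B where "\<forall>x. norm (g x) \<le> B" using test_bounded[OF t] by blast
  thus ?thesis using integrable_mult_bounded[OF w_int meas_test[OF t]] by blast
qed

lemma cv_has_derivative: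
  assumes t: "test_fn g"
  shows "(cv g has_derivative (\<lambda>h. \<Sum>c\<in>Basis. (h \<bullet> c) *\<^sub>R cv (pderiv_dir c g) \<eta>)) (at \<eta>)"
  unfolding has_derivative_at_alt
proof (intro conjI allI impI)
  show "bounded_linear (\<lambda>h. \<Sum>c\<in>Basis. (h \<bullet> c) *\<^sub>R cv (pderiv_dir c g) \<eta>)"
    by (intro bounded_linear_sum) (auto intro!: bounded_linear_intros)
  fix e :: real assume e: "e > 0"
  define I where "I = (\<integral>m. norm (w m) \<partial>M)"
  have I0: "I \<ge> 0" unfolding I_def by simp
  define e' where "e' = e / (I + 1)"
  have e': "e' > 0" unfolding e'_def using e I0 by simp
  obtain d where d: "d > 0" "\<And>u h. norm h < d \<Longrightarrow> norm (g (u + h) - g u - Dg g u h) \<le> e' * norm h"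
    using test_unif_deriv[OF t e'] by blast
  have tp: "\<And>c. c \<in> Basis \<Longrightarrow> test_fn (pderiv_dir c g)" using test_pderiv_dir[OF t] .
  have "norm (cv g y - cv g \<eta> - (\<Sum>c\<in>Basis. ((y - \<eta>) \<bullet> c) *\<^sub>R cv (pderiv_dir c g) \<eta>)) \<le> e * norm (y - \<eta>)"
    if y: "norm (y - \<eta>) < d" for y
  proof -
    define h where "h = y - \<eta>"
    have yh: "y = \<eta> + h" unfolding h_def by simp
    let ?F = "\<lambda>m. w m * (g ((\<eta> - b m) + h) - g (\<eta> - b m) - Dg g (\<eta> - b m) h)"
    have i1: "integrable M (\<lambda>m. w m * g (y - b m))" "integrable M (\<lambda>m. w m * g (\<eta> - b m))"
      using int_test[OF t] by auto
    have i2: "integrable M (\<lambda>m. (h \<bullet> c) *\<^sub>R (w m * pderiv_dir c g (\<eta> - b m)))" if "c \<in> Basis" for c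
      using int_test[OF tp[OF that]] by simp
    have "(\<integral>m. ?F m \<partial>M) = (\<integral>m. w m * g (y - b m) - w m * g (\<eta> - b m)
         - (\<Sum>c\<in>Basis. (h \<bullet> c) *\<^sub>R (w m * pderiv_dir c g (\<eta> - b m))) \<partial>M)"
      unfolding Dg_def yh by (intro Bochner_Integration.integral_cong refl)
         (simp add: algebra_simps sum_distrib_left mult_scaleR_right diff_diff_eq2 add.commute)
    also have "\<dots> = cv g y - cv g \<eta> - (\<Sum>c\<in>Basis. (h \<bullet> c) *\<^sub>R cv (pderiv_dir c g) \<eta>)"
      unfolding cv_def using i1 i2
      by (simp add: Bochner_Integration.integral_diff Bochner_Integration.integral_sum integrable_sum)
    finally have eq: "cv g y - cv g \<eta> - (\<Sum>c\<in>Basis. (h \<bullet> c) *\<^sub>R cv (pderiv_dir c g) \<eta>) = (\<integral>m. ?F m \<partial>M)" ..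
    have iF: "integrable M (\<lambda>m. norm (w m) * (e' * norm h))" using w_int by simp
    have "norm (\<integral>m. ?F m \<partial>M) \<le> (\<integral>m. norm (?F m) \<partial>M)" by (rule integral_norm_bound)
    also have "\<dots> \<le> (\<integral>m. norm (w m) * (e' * norm h) \<partial>M)"
    proof (rule integral_mono_AE')
      show "integrable M (\<lambda>m. norm (w m) * (e' * norm h))" by (rule iF)
      show "AE m in M. norm (?F m) \<le> norm (w m) * (e' * norm h)"
      proof (rule AE_I2)
        fix m
        have "norm (?F m) = norm (w m) * norm (g ((\<eta> - b m) + h) - g (\<eta> - b m) - Dg g (\<eta> - b m) h)"
          by (simp add: norm_mult)
        also have "\<dots> \<le> norm (w m) * (e' * norm h)"
          using d(2)[of h "\<eta> - b m"] y unfolding h_def by (intro mult_left_mono) auto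
        finally show "norm (?F m) \<le> norm (w m) * (e' * norm h)" .
      qed
      show "AE m in M. 0 \<le> norm (w m) * (e' * norm h)" using e' by simp
    qed
    also have "\<dots> = I * e' * norm h" unfolding I_def by simp
    also have "\<dots> \<le> e * norm h"
    proof -
      have "I * e' \<le> e" unfolding e'_def using I0 e by (simp add: field_simps)
      thus ?thesis by (intro mult_right_mono) auto
    qed
    finally have fin: "norm (\<integral>m. ?F m \<partial>M) \<le> e * norm h" .
    have "norm (cv g y - cv g \<eta> - (\<Sum>c\<in>Basis. (h \<bullet> c) *\<^sub>R cv (pderiv_dir c g) \<eta>)) \<le> e * norm h"
      unfolding eq by (rule fin)
    thus ?thesis unfolding h_def .
  qed
  thus "\<exists>d>0. \<forall>y. norm (y - \<eta>) < d \<longrightarrow>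
        norm (cv g y - cv g \<eta> - (\<Sum>c\<in>Basis. ((y - \<eta>) \<bullet> c) *\<^sub>R cv (pderiv_dir c g) \<eta>)) \<le> e * norm (y - \<eta>)"
    using d(1) by (intro exI[of _ d]) auto
qed


lemma cv_pderiv:
  assumes t: "test_fn g" and c: "c \<in> Basis"
  shows "pderiv_dir c (cv g) \<eta> = cv (pderiv_dir c g) \<eta>"
proof -
  have "pderiv_dir c (cv g) \<eta> = (\<Sum>c'\<in>Basis. (c \<bullet> c') *\<^sub>R cv (pderiv_dir c' g) \<eta>)"
    by (rule pderiv_dir_has_derivative[OF cv_has_derivative[OF t]])
  also have "\<dots> = (\<Sum>c'\<in>Basis. (if c' = c then cv (pderiv_dir c' g) \<eta> else 0))"
    by (intro sum.cong refl) (use c in \<open>auto simp: inner_Basis\<close>)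
  also have "\<dots> = cv (pderiv_dir c g) \<eta>" using c by simp
  finally show ?thesis .
qed

lemma cv_pderivs:
  assumes "set is \<subseteq> Basis" "test_fn g"
  shows "pderivs is (cv g) = cv (pderivs is g)"
  using assms(1)
proof (induction "is")
  case Nil thus ?case by simp
next
  case (Cons i "is")
  have t: "test_fn (pderivs is g)" using test_pderivs[OF assms(2)] Cons.prems by simp
  show ?case using Cons by (intro ext) (simp add: cv_pderiv[OF t])
qed

lemma smooth_cv:
  assumes "test_fn g" shows "smooth_fn (cv g)"
  unfolding smooth_fn_def
proof (intro allI impI)
  fix "is" :: "'a list" and x assume B: "set is \<subseteq> Basis"
  have t: "test_fn (pderivs is g)" using test_pderivs[OF assms B] .
  show "pderivs is (cv g) differentiable at x"
    unfolding cv_pderivs[OF B assms] differentiable_def using cv_has_derivative[OF t] by blast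
qed

lemma test_cv:
  assumes t: "test_fn g" and A: "\<And>m. m \<in> space M \<Longrightarrow> w m \<noteq> 0 \<Longrightarrow> norm (b m) \<le> A"
  shows "test_fn (cv g)"
proof -
  obtain R where R: "\<forall>x. g x \<noteq> 0 \<longrightarrow> norm x \<le> R" using test_supp_ball[OF t] by blast
  have "{x. cv g x \<noteq> 0} \<subseteq> cball 0 (R + A)"
  proof
    fix x assume x: "x \<in> {x. cv g x \<noteq> 0}"
    show "x \<in> cball 0 (R + A)"
    proof (rule ccontr)
      assume "x \<notin> cball 0 (R + A)"
      hence nx: "norm x > R + A" by simp
      have "w m * g (x - b m) = 0" if m: "m \<in> space M" for m
      proof (cases "w m = 0")
        case False
        have "norm x \<le> norm (x - b m) + norm (b m)" using norm_triangle_sub[of x "b m"] by simp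
        hence "norm (x - b m) > R" using A[OF m False] nx by simp
        hence "g (x - b m) = 0" using R by force
        thus ?thesis by simp
      qed simp
      hence "cv g x = 0" unfolding cv_def by (simp add: Bochner_Integration.integral_cong[where g="\<lambda>_. 0"])
      thus False using x by simp
    qed
  qed
  hence "bounded {x. cv g x \<noteq> 0}" using bounded_cball bounded_subset by blast
  thus ?thesis unfolding test_fn_iff using smooth_cv[OF t] by simp
qed

end

lemma test_integrable:
  assumes "test_fn (g::'a::euclidean_space \<Rightarrow> complex)" shows "integrable lborel g"
proof -
  obtain B where B: "\<forall>x. norm (g x) \<le> B" using test_bounded[OF assms] by blast
  obtain R where R: "\<forall>x. g x \<noteq> 0 \<longrightarrow> norm x \<le> R" using test_supp_ball[OF assms] by blast
  show ?thesis
  proof (rule Bochner_Integration.integrable_bound[where f="\<lambda>x. B *\<^sub>R indicator (cball (0::'a) R) x :: real"])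
    show "integrable lborel (\<lambda>x. B *\<^sub>R indicator (cball (0::'a) R) x :: real)"
      using emeasure_lborel_cball_finite[of "0::'a" R]
      by (intro integrable_scaleR_right integrable_real_indicator) auto
    show "g \<in> borel_measurable lborel" using test_borel[OF assms] by simp
    show "AE x in lborel. norm (g x) \<le> norm (B *\<^sub>R indicator (cball (0::'a) R) x :: real)"
    proof (rule AE_I2)
      fix x
      show "norm (g x) \<le> norm (B *\<^sub>R indicator (cball (0::'a) R) x :: real)"
      proof (cases "g x = 0")
        case False
        hence "x \<in> cball 0 R" using R by simp
        thus ?thesis using B by (simp add: indicator_def) (smt (verit) B)
      qed simp
    qed
  qed
qed

lemma lborel_reflect: "distr lborel borel (\<lambda>x. t - x) = (lborel :: 'a::euclidean_space measure)"
proof -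
  have "lborel = density (distr lborel borel (\<lambda>x. t + (-1) *\<^sub>R x)) (\<lambda>_. \<bar>-1::real\<bar>^DIM('a))"
    by (rule lborel_affine) simp
  thus ?thesis by (simp add: density_1)
qed

lemma integral_reflect:
  fixes g :: "'a::euclidean_space \<Rightarrow> 'b::{banach, second_countable_topology}"
  assumes "g \<in> borel_measurable borel"
  shows "(\<integral>\<eta>. g (t - \<eta>) \<partial>lborel) = (\<integral>\<eta>. g \<eta> \<partial>lborel)"
proof -
  have "(\<integral>\<eta>. g \<eta> \<partial>lborel) = (\<integral>\<eta>. g \<eta> \<partial>distr lborel borel (\<lambda>x. t - x))" by (simp add: lborel_reflect)
  also have "\<dots> = (\<integral>\<eta>. g (t - \<eta>) \<partial>lborel)" by (rule integral_distr) (use assms in auto)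
  finally show ?thesis ..
qed

lemma integrable_reflect:
  fixes g :: "'a::euclidean_space \<Rightarrow> 'b::{banach, second_countable_topology}"
  assumes "integrable lborel g"
  shows "integrable lborel (\<lambda>\<eta>. g (t - \<eta>))"
proof -
  have m: "g \<in> borel_measurable borel" using assms by simp
  have "integrable (distr lborel borel (\<lambda>x. t - x)) g" by (simp add: lborel_reflect assms)
  thus ?thesis by (subst (asm) integrable_distr_eq) (use m in auto)
qed

lemma wave_hat_bound: "\<bar>wave_hat s \<xi>\<bar> \<le> \<bar>s\<bar>"
proof (cases "norm \<xi> = 0")
  case True thus ?thesis by (simp add: wave_hat_def)
next
  case False
  hence p: "norm \<xi> > 0" by simp
  have "\<bar>sin (s * norm \<xi>)\<bar> \<le> \<bar>s\<bar> * norm \<xi>" using abs_sin_x_le_abs_x[of "s * norm \<xi>"] by (simp add: abs_mult)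
  thus ?thesis using p by (simp add: wave_hat_def abs_div pos_divide_le_eq)
qed

lemma wave_hat_minus: "wave_hat s (-\<xi>) = wave_hat s \<xi>"
  by (simp add: wave_hat_def)

lemma wave_hat_meas[measurable]: "wave_hat s \<in> borel_measurable borel"
  unfolding wave_hat_def by measurable

lemma D_int:
  fixes w :: "'m \<Rightarrow> complex" and g :: "'a::euclidean_space \<Rightarrow> complex"
  assumes sf: "sigma_finite_measure M1" and w: "integrable M1 w" and g: "integrable lborel g"
    and c[measurable]: "c \<in> borel_measurable M1"
  shows "integrable (M1 \<Otimes>\<^sub>M lborel) (\<lambda>p. norm (w (fst p)) * norm (g (c (fst p) - snd p)))"
proof -
  interpret P: pair_sigma_finite M1 "lborel :: 'a measure"
    unfolding pair_sigma_finite_def using sf lborel.sigma_finite_measure_axioms by simp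
  have [measurable]: "g \<in> borel_measurable borel" using g by simp
  have [measurable]: "w \<in> borel_measurable M1" using w by simp
  have ig: "integrable lborel (\<lambda>\<eta>. norm (g (t - \<eta>)))" for t using integrable_reflect[OF integrable_norm[OF g]] .
  show ?thesis
  proof (rule P.Fubini_integrable)
    show "(\<lambda>p. norm (w (fst p)) * norm (g (c (fst p) - snd p))) \<in> borel_measurable (M1 \<Otimes>\<^sub>M lborel)"
      by measurable
    have eq: "(\<integral>\<eta>. norm (norm (w \<xi>) * norm (g (c \<xi> - \<eta>))) \<partial>lborel) = norm (w \<xi>) * (\<integral>\<eta>. norm (g \<eta>) \<partial>lborel)" for \<xi>
    proof -
      have "(\<integral>\<eta>. norm (norm (w \<xi>) * norm (g (c \<xi> - \<eta>))) \<partial>lborel) = norm (w \<xi>) * (\<integral>\<eta>. norm (g (c \<xi> - \<eta>)) \<partial>lborel)"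
        by simp
      also have "(\<integral>\<eta>. norm (g (c \<xi> - \<eta>)) \<partial>lborel) = (\<integral>\<eta>. norm (g \<eta>) \<partial>lborel)"
        by (rule integral_reflect[where g="\<lambda>x. norm (g x)"]) measurable
      finally show ?thesis .
    qed
    show "integrable M1 (\<lambda>\<xi>. \<integral>\<eta>. norm (norm (w (fst (\<xi>, \<eta>))) * norm (g (c (fst (\<xi>, \<eta>)) - snd (\<xi>, \<eta>)))) \<partial>lborel)"
      unfolding fst_conv snd_conv eq using w by simp
    show "AE \<xi> in M1. integrable lborel (\<lambda>\<eta>. norm (w (fst (\<xi>, \<eta>))) * norm (g (c (fst (\<xi>, \<eta>)) - snd (\<xi>, \<eta>))))"
      using ig by simp
  qed
qed

lemma prod_integrable:
  fixes w :: "'m \<Rightarrow> complex" and g :: "'a::euclidean_space \<Rightarrow> complex" and F :: "'m \<times> 'a \<Rightarrow> complex"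
  assumes sf: "sigma_finite_measure M1" and w: "integrable M1 w" and g: "integrable lborel g"
    and c: "c \<in> borel_measurable M1" and F: "F \<in> borel_measurable (M1 \<Otimes>\<^sub>M lborel)"
    and bd: "\<And>p. norm (F p) \<le> norm (w (fst p)) * norm (g (c (fst p) - snd p))"
  shows "integrable (M1 \<Otimes>\<^sub>M lborel) F"
  by (rule Bochner_Integration.integrable_bound[OF D_int[OF sf w g c] F]) (use bd in auto)

interpretation lbprod: product_sigma_finite "\<lambda>_::nat. (lborel :: 'a::euclidean_space measure)"
  unfolding product_sigma_finite_def using lborel.sigma_finite_measure_axioms by simp

locale wsetup =
  fixes h :: "nat \<Rightarrow> 'a::euclidean_space \<Rightarrow> complex" and s :: "nat \<Rightarrow> real" and n :: nat
  assumes h_test: "\<And>i. i < n \<Longrightarrow> test_fn (h i)"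
begin

definition Mk :: "nat \<Rightarrow> (nat \<Rightarrow> 'a) measure" where "Mk k = PiM {..<k} (\<lambda>_. lborel)"

definition W :: "nat \<Rightarrow> (nat \<Rightarrow> 'a) \<Rightarrow> complex" where
  "W k \<xi> = (\<Prod>i<k. h i (\<xi> i)) * (\<Prod>j<k. complex_of_real (wave_hat (s j) (\<Sum>i\<le>j. \<xi> i)))"

definition a :: "nat \<Rightarrow> (nat \<Rightarrow> 'a) \<Rightarrow> 'a" where "a k \<xi> = (\<Sum>i<k. \<xi> i)"

definition Psi :: "nat \<Rightarrow> 'a \<Rightarrow> complex" where
  "Psi k y = (\<integral>\<xi>. (\<integral>\<zeta>. W k \<xi> * h k \<zeta> * cis (- ((a k \<xi> + \<zeta>) \<bullet> y)) \<partial>lborel) \<partial>Mk k)"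

definition Phi :: "nat \<Rightarrow> 'a \<Rightarrow> complex" where
  "Phi k y = (\<integral>\<xi>. (\<integral>\<zeta>. W k \<xi> * h k \<zeta> * complex_of_real (wave_hat (s k) (a k \<xi> + \<zeta>))
       * cis (- ((a k \<xi> + \<zeta>) \<bullet> y)) \<partial>lborel) \<partial>Mk k)"

definition R :: "nat \<Rightarrow> real" where "R i = (SOME R. \<forall>x. h i x \<noteq> 0 \<longrightarrow> norm x \<le> R)"

lemma R_prop: "i < n \<Longrightarrow> h i x \<noteq> 0 \<Longrightarrow> norm x \<le> R i"
proof -
  assume i: "i < n" and x: "h i x \<noteq> 0"
  have "\<exists>R. \<forall>x. h i x \<noteq> 0 \<longrightarrow> norm x \<le> R" using test_supp_ball[OF h_test[OF i]] .
  hence "\<forall>x. h i x \<noteq> 0 \<longrightarrow> norm x \<le> R i" unfolding R_def by (rule someI_ex)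
  thus ?thesis using x by blast
qed

lemma sf_Mk: "sigma_finite_measure (Mk k)"
  unfolding Mk_def by (rule lbprod.sigma_finite) simp

lemma h_meas[measurable]: "i < n \<Longrightarrow> h i \<in> borel_measurable borel"
  using test_borel h_test by blast

lemma comp_meas: "i < k \<Longrightarrow> (\<lambda>\<xi>. \<xi> i) \<in> measurable (Mk k) (borel :: 'a measure)"
  unfolding Mk_def using measurable_component_singleton[of i "{..<k}" "\<lambda>_. lborel::'a measure"] by simp

lemma a_meas: "a k \<in> borel_measurable (Mk k)"
  unfolding a_def
proof (rule borel_measurable_sum)
  fix i assume "i \<in> {..<k}"
  thus "(\<lambda>\<xi>. \<xi> i) \<in> borel_measurable (Mk k)" using comp_meas by simp
qed

lemma W_meas: "k \<le> n \<Longrightarrow> W k \<in> borel_measurable (Mk k)"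
proof -
  assume k: "k \<le> n"
  have m1: "(\<lambda>\<xi>. h i (\<xi> i)) \<in> borel_measurable (Mk k)" if "i < k" for i
    using measurable_compose[OF comp_meas[OF that] h_meas[of i]] that k by simp

  have m2: "(\<lambda>\<xi>. \<Sum>i\<le>j. \<xi> i) \<in> borel_measurable (Mk k)" if "j < k" for j
    by (rule borel_measurable_sum) (use comp_meas that in auto)
  have m3: "(\<lambda>\<xi>. complex_of_real (wave_hat (s j) (\<Sum>i\<le>j. \<xi> i))) \<in> borel_measurable (Mk k)" if "j < k" for j
    using measurable_compose[OF m2[OF that] wave_hat_meas[of "s j"]] by measurable
  show ?thesis unfolding W_def
    by (intro borel_measurable_times borel_measurable_prod) (use m1 m3 in auto)
qed

lemma W_int: "k \<le> n \<Longrightarrow> integrable (Mk k) (W k)"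
proof -
  assume k: "k \<le> n"
  have P: "integrable (Mk k) (\<lambda>\<xi>. \<Prod>i\<in>{..<k}. h i (\<xi> i))"
    unfolding Mk_def by (rule lbprod.product_integrable_prod) (use k in \<open>auto intro!: test_integrable h_test\<close>)
  have m3: "(\<lambda>\<xi>. (\<Prod>j<k. complex_of_real (wave_hat (s j) (\<Sum>i\<le>j. \<xi> i)))) \<in> borel_measurable (Mk k)"
  proof (rule borel_measurable_prod)
    fix j assume j: "j \<in> {..<k}"
    have m2: "(\<lambda>\<xi>. \<Sum>i\<le>j. \<xi> i) \<in> borel_measurable (Mk k)"
      by (rule borel_measurable_sum) (use comp_meas j in auto)
    show "(\<lambda>\<xi>. complex_of_real (wave_hat (s j) (\<Sum>i\<le>j. \<xi> i))) \<in> borel_measurable (Mk k)"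
      using measurable_compose[OF m2 wave_hat_meas[of "s j"]] by measurable
  qed
  have bd: "norm (\<Prod>j<k. complex_of_real (wave_hat (s j) (\<Sum>i\<le>j. \<xi> i))) \<le> (\<Prod>j<k. \<bar>s j\<bar>)" for \<xi>
  proof -
    have "norm (\<Prod>j<k. complex_of_real (wave_hat (s j) (\<Sum>i\<le>j. \<xi> i))) = (\<Prod>j<k. norm (complex_of_real (wave_hat (s j) (\<Sum>i\<le>j. \<xi> i))))"
      by (rule prod_norm[symmetric])
    also have "\<dots> \<le> (\<Prod>j<k. \<bar>s j\<bar>)" by (intro prod_mono) (simp add: wave_hat_bound)
    finally show ?thesis .
  qed
  show ?thesis unfolding W_def by (rule integrable_mult_bounded[OF P m3 bd])
qed

lemma W_supp: "k \<le> n \<Longrightarrow> W k \<xi> \<noteq> 0 \<Longrightarrow> norm (a k \<xi>) \<le> (\<Sum>i<k. R i)"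
proof -
  assume k: "k \<le> n" and W: "W k \<xi> \<noteq> 0"
  have "h i (\<xi> i) \<noteq> 0" if "i < k" for i using W that unfolding W_def by auto
  hence "norm (\<xi> i) \<le> R i" if "i < k" for i using R_prop that k by simp
  hence "(\<Sum>i<k. norm (\<xi> i)) \<le> (\<Sum>i<k. R i)" by (intro sum_mono) auto
  thus ?thesis unfolding a_def using norm_sum[of "\<lambda>i. \<xi> i" "{..<k}"] by linarith
qed

end

lemma cis_meas[measurable]: "cis \<in> borel_measurable borel"
  by (rule borel_measurable_continuous_onI) (auto intro!: continuous_intros)

context wsetup begin

lemma upd_sum_lt: "j < (k::nat) \<Longrightarrow> (\<Sum>i\<le>j. (\<xi>(k:=\<zeta>)) i) = (\<Sum>i\<le>j. (\<xi> i :: 'a))"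
proof -
  assume jk: "j < k"
  show ?thesis
  proof (rule sum.cong[OF refl])
    fix i assume "i \<in> {..j}"
    hence "i \<noteq> k" using jk by auto
    thus "(\<xi>(k:=\<zeta>)) i = \<xi> i" by simp
  qed
qed

lemma a_upd: "a (Suc k) (\<xi>(k:=\<zeta>)) = a k \<xi> + \<zeta>"
proof -
  have "(\<Sum>i<k. (\<xi>(k:=\<zeta>)) i) = (\<Sum>i<k. \<xi> i)" by (intro sum.cong) auto
  thus ?thesis unfolding a_def by simp
qed

lemma W_upd: "W (Suc k) (\<xi>(k:=\<zeta>)) = W k \<xi> * h k \<zeta> * complex_of_real (wave_hat (s k) (a k \<xi> + \<zeta>))"
proof -
  have p1: "(\<Prod>i<k. h i ((\<xi>(k:=\<zeta>)) i)) = (\<Prod>i<k. h i (\<xi> i))" by (intro prod.cong) auto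
  have p2: "(\<Prod>j<k. complex_of_real (wave_hat (s j) (\<Sum>i\<le>j. (\<xi>(k:=\<zeta>)) i)))
      = (\<Prod>j<k. complex_of_real (wave_hat (s j) (\<Sum>i\<le>j. \<xi> i)))"
    by (intro prod.cong refl) (simp add: upd_sum_lt)
  have s: "(\<Sum>i\<le>k. (\<xi>(k:=\<zeta>)) i) = a k \<xi> + \<zeta>"
    using a_upd[of k \<xi> \<zeta>] unfolding a_def by (simp add: lessThan_Suc_atMost)
  have "W (Suc k) (\<xi>(k:=\<zeta>)) = ((\<Prod>i<k. h i ((\<xi>(k:=\<zeta>)) i)) * h k ((\<xi>(k:=\<zeta>)) k)) *
     ((\<Prod>j<k. complex_of_real (wave_hat (s j) (\<Sum>i\<le>j. (\<xi>(k:=\<zeta>)) i))) *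
       complex_of_real (wave_hat (s k) (\<Sum>i\<le>k. (\<xi>(k:=\<zeta>)) i)))"
    unfolding W_def by (simp only: prod.lessThan_Suc)
  also have "\<dots> = ((\<Prod>i<k. h i (\<xi> i)) * h k \<zeta>) *
     ((\<Prod>j<k. complex_of_real (wave_hat (s j) (\<Sum>i\<le>j. \<xi> i))) *
       complex_of_real (wave_hat (s k) (a k \<xi> + \<zeta>)))"
    by (simp only: p1 p2 s fun_upd_same)
  also have "\<dots> = W k \<xi> * h k \<zeta> * complex_of_real (wave_hat (s k) (a k \<xi> + \<zeta>))"
    unfolding W_def by (simp only: mult_ac)
  finally show ?thesis .
qed

lemma norm_cis_one[simp]: "norm (cis t) = 1" by simp

lemma stepC:
  assumes k: "k < n"
  shows "Phi k y = (\<integral>\<xi>. W (Suc k) \<xi> * cis (- (a (Suc k) \<xi> \<bullet> y)) \<partial>Mk (Suc k))"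
proof -
  have Wm: "W (Suc k) \<in> borel_measurable (Mk (Suc k))" using W_meas k by simp
  have am: "a (Suc k) \<in> borel_measurable (Mk (Suc k))" by (rule a_meas)
  have cm: "(\<lambda>\<xi>. cis (- (a (Suc k) \<xi> \<bullet> y))) \<in> borel_measurable (Mk (Suc k))"
    using am by measurable
  have int: "integrable (Mk (Suc k)) (\<lambda>\<xi>. W (Suc k) \<xi> * cis (- (a (Suc k) \<xi> \<bullet> y)))"
    by (rule integrable_mult_bounded[OF W_int cm, of 1]) (use k in auto)
  have MS: "Mk (Suc k) = PiM (insert k {..<k}) (\<lambda>_. lborel)" unfolding Mk_def by (simp add: lessThan_Suc)
  have "(\<integral>\<xi>. W (Suc k) \<xi> * cis (- (a (Suc k) \<xi> \<bullet> y)) \<partial>PiM (insert k {..<k}) (\<lambda>_. lborel)) =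
    (\<integral>\<xi>. (\<integral>\<zeta>. W (Suc k) (\<xi>(k:=\<zeta>)) * cis (- (a (Suc k) (\<xi>(k:=\<zeta>)) \<bullet> y)) \<partial>lborel) \<partial>PiM {..<k} (\<lambda>_. lborel))"
    by (rule lbprod.product_integral_insert) (use int MS in auto)
  hence "(\<integral>\<xi>. W (Suc k) \<xi> * cis (- (a (Suc k) \<xi> \<bullet> y)) \<partial>Mk (Suc k)) =
    (\<integral>\<xi>. (\<integral>\<zeta>. W (Suc k) (\<xi>(k:=\<zeta>)) * cis (- (a (Suc k) (\<xi>(k:=\<zeta>)) \<bullet> y)) \<partial>lborel) \<partial>Mk k)"
    unfolding MS by (simp add: Mk_def)
  also have "\<dots> = Phi k y"
    unfolding Phi_def W_upd a_upd by (simp add: mult.assoc)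
  finally show ?thesis by simp
qed

lemma Psi0: "Psi 0 y = fourier (h 0) y"
proof -
  have "Psi 0 y = (\<integral>\<zeta>. h 0 \<zeta> * cis (- (\<zeta> \<bullet> y)) \<partial>lborel)"
    unfolding Psi_def Mk_def PiM_empty W_def a_def
    by (simp add: lebesgue_integral_count_space_finite PiM_empty measure_count_space)
  also have "\<dots> = fourier (h 0) y" unfolding fourier_def by (simp add: mult.commute inner_commute)
  finally show ?thesis .
qed

lemma stepA:
  assumes k: "k < n"
  shows "fourier (h (Suc k)) y * Phi k y = Psi (Suc k) y"
proof -
  let ?X = "\<lambda>\<xi>. W (Suc k) \<xi> * cis (- (a (Suc k) \<xi> \<bullet> y))"
  have "fourier (h (Suc k)) y * Phi k y = (\<integral>\<xi>. ?X \<xi> * fourier (h (Suc k)) y \<partial>Mk (Suc k))"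
    unfolding stepC[OF k] by (simp add: mult.commute)
  also have "\<dots> = (\<integral>\<xi>. (\<integral>\<zeta>. ?X \<xi> * (cis (- (y \<bullet> \<zeta>)) * h (Suc k) \<zeta>) \<partial>lborel) \<partial>Mk (Suc k))"
    unfolding fourier_def by simp
  also have "\<dots> = Psi (Suc k) y"
    unfolding Psi_def
  proof (intro Bochner_Integration.integral_cong refl)
    fix \<xi> \<zeta>
    have key: "cis (- (a (Suc k) \<xi> \<bullet> y)) * cis (- (y \<bullet> \<zeta>)) = cis (- ((a (Suc k) \<xi> + \<zeta>) \<bullet> y))"
      by (simp add: cis_mult inner_add_left inner_commute[of y \<zeta>])
    have "?X \<xi> * (cis (- (y \<bullet> \<zeta>)) * h (Suc k) \<zeta>) =
       W (Suc k) \<xi> * h (Suc k) \<zeta> * (cis (- (a (Suc k) \<xi> \<bullet> y)) * cis (- (y \<bullet> \<zeta>)))"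
      by (simp only: mult_ac)
    also have "\<dots> = W (Suc k) \<xi> * h (Suc k) \<zeta> * cis (- ((a (Suc k) \<xi> + \<zeta>) \<bullet> y))"
      by (simp only: key)
    finally show "?X \<xi> * (cis (- (y \<bullet> \<zeta>)) * h (Suc k) \<zeta>) = W (Suc k) \<xi> * h (Suc k) \<zeta> * cis (- ((a (Suc k) \<xi> + \<zeta>) \<bullet> y))" .
  qed
  finally show ?thesis .
qed

end

context wsetup begin

lemma pair_Mk: "pair_sigma_finite (Mk k) (lborel :: 'a measure)"
  unfolding pair_sigma_finite_def using sf_Mk lborel.sigma_finite_measure_axioms by simp

lemma stepB:
  assumes k: "k < n"
    and GF: "\<And>\<phi>. schwartz \<phi> \<Longrightarrow> G (fourier \<phi>) = (\<integral>\<xi>. \<phi> \<xi> * complex_of_real (wave_hat (s k) \<xi>) \<partial>lborel)"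
  shows "G (\<lambda>z. Psi k (y - z)) = Phi k y"
proof -
  interpret P: pair_sigma_finite "Mk k" "lborel :: 'a measure" by (rule pair_Mk)
  note [measurable] = W_meas[of k] a_meas[of k] h_meas[OF k]
  have kn: "k \<le> n" using k by simp
  have Wm[measurable]: "W k \<in> borel_measurable (Mk k)" using W_meas kn by simp
  have hi: "integrable lborel (h k)" using test_integrable h_test k by blast
  define g where "g = (\<lambda>u. cis (u \<bullet> y) * h k (-u))"
  have tg: "test_fn g" unfolding g_def by (rule test_mult[OF smooth_cis test_reflect[OF h_test[OF k]]])
  define w where "w = (\<lambda>\<xi>. W k \<xi> * cis (- (a k \<xi> \<bullet> y)))"
  have cm: "(\<lambda>\<xi>. cis (- (a k \<xi> \<bullet> y))) \<in> borel_measurable (Mk k)" by measurable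
  have wi: "integrable (Mk k) w" unfolding w_def
    by (rule integrable_mult_bounded[OF W_int[OF kn] cm, of 1]) simp
  have mb: "(\<lambda>\<xi>. - a k \<xi>) \<in> borel_measurable (Mk k)" by measurable
  interpret C: cvs "Mk k" w "\<lambda>\<xi>. - a k \<xi>" by unfold_locales (use wi mb in auto)
  have tcv: "test_fn (C.cv g)"
  proof (rule C.test_cv[OF tg])
    fix \<xi> assume "\<xi> \<in> space (Mk k)" "w \<xi> \<noteq> 0"
    hence "W k \<xi> \<noteq> 0" unfolding w_def by auto
    thus "norm (- a k \<xi>) \<le> (\<Sum>i<k. R i)" using W_supp[OF kn] by simp
  qed
  have sch: "schwartz (C.cv g)" by (rule test_schwartz[OF tcv])
  have cvexp: "C.cv g \<eta> = (\<integral>\<xi>. W k \<xi> * h k (- a k \<xi> - \<eta>) * cis (\<eta> \<bullet> y) \<partial>Mk k)" for \<eta>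
    unfolding C.cv_def
  proof (intro Bochner_Integration.integral_cong refl)
    fix \<xi>
    have e1: "cis (- (a k \<xi> \<bullet> y)) * cis ((\<eta> - - a k \<xi>) \<bullet> y) = cis (\<eta> \<bullet> y)"
      by (simp add: cis_mult inner_add_left)
    have e2: "- (\<eta> - - a k \<xi>) = - a k \<xi> - \<eta>" by simp
    show "w \<xi> * g (\<eta> - - a k \<xi>) = W k \<xi> * h k (- a k \<xi> - \<eta>) * cis (\<eta> \<bullet> y)"
      unfolding w_def g_def e2[symmetric]
      by (simp only: mult_ac e1[symmetric])
  qed
  have claim1: "Psi k (y - z) = fourier (C.cv g) z" for z
  proof -
    define K where "K = (\<lambda>\<xi> \<eta>. W k \<xi> * h k (- a k \<xi> - \<eta>) * cis (\<eta> \<bullet> y) * cis (- (z \<bullet> \<eta>)))"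
    have Kint: "integrable (Mk k \<Otimes>\<^sub>M lborel) (case_prod K)"
    proof (rule prod_integrable[OF sf_Mk W_int[OF kn] hi mb])
      show "case_prod K \<in> borel_measurable (Mk k \<Otimes>\<^sub>M lborel)" unfolding K_def by measurable
      fix p :: "(nat \<Rightarrow> 'a) \<times> 'a"
      show "norm (case_prod K p) \<le> norm (W k (fst p)) * norm (h k (- a k (fst p) - snd p))"
        unfolding K_def by (cases p) (simp add: norm_mult)
    qed
    have inner: "(\<integral>\<zeta>. W k \<xi> * h k \<zeta> * cis (- ((a k \<xi> + \<zeta>) \<bullet> (y - z))) \<partial>lborel) = (\<integral>\<eta>. K \<xi> \<eta> \<partial>lborel)" for \<xi>
    proof -
      have "(\<integral>\<zeta>. W k \<xi> * h k \<zeta> * cis (- ((a k \<xi> + \<zeta>) \<bullet> (y - z))) \<partial>lborel)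
          = (\<integral>\<eta>. W k \<xi> * h k (- a k \<xi> - \<eta>) * cis (- ((a k \<xi> + (- a k \<xi> - \<eta>)) \<bullet> (y - z))) \<partial>lborel)"
        by (rule integral_reflect[symmetric]) measurable
      also have "\<dots> = (\<integral>\<eta>. K \<xi> \<eta> \<partial>lborel)"
        unfolding K_def
      proof (intro Bochner_Integration.integral_cong refl)
        fix \<eta>
        have "cis (- ((a k \<xi> + (- a k \<xi> - \<eta>)) \<bullet> (y - z))) = cis (\<eta> \<bullet> y) * cis (- (z \<bullet> \<eta>))"
          by (simp add: cis_mult inner_diff_right inner_commute[of z])
        thus "W k \<xi> * h k (- a k \<xi> - \<eta>) * cis (- ((a k \<xi> + (- a k \<xi> - \<eta>)) \<bullet> (y - z))) =
              W k \<xi> * h k (- a k \<xi> - \<eta>) * cis (\<eta> \<bullet> y) * cis (- (z \<bullet> \<eta>))" by (simp only: mult_ac)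
      qed
      finally show ?thesis .
    qed
    have "Psi k (y - z) = (\<integral>\<xi>. (\<integral>\<eta>. K \<xi> \<eta> \<partial>lborel) \<partial>Mk k)"
      unfolding Psi_def inner ..
    also have "\<dots> = (\<integral>\<eta>. (\<integral>\<xi>. K \<xi> \<eta> \<partial>Mk k) \<partial>lborel)"
      by (rule P.Fubini_integral[symmetric]) (rule Kint)
    also have "\<dots> = (\<integral>\<eta>. C.cv g \<eta> * cis (- (z \<bullet> \<eta>)) \<partial>lborel)"
      unfolding cvexp K_def by simp
    also have "\<dots> = fourier (C.cv g) z" unfolding fourier_def by (simp add: mult.commute)
    finally show ?thesis .
  qed
  have claim3: "(\<integral>\<eta>. C.cv g \<eta> * complex_of_real (wave_hat (s k) \<eta>) \<partial>lborel) = Phi k y"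
  proof -
    define K where "K = (\<lambda>\<xi> \<eta>. W k \<xi> * h k (- a k \<xi> - \<eta>) * cis (\<eta> \<bullet> y) * complex_of_real (wave_hat (s k) \<eta>))"
    have wi2: "integrable (Mk k) (\<lambda>\<xi>. complex_of_real \<bar>s k\<bar> * W k \<xi>)" using W_int[OF kn] by simp
    have Kint: "integrable (Mk k \<Otimes>\<^sub>M lborel) (case_prod K)"
    proof (rule prod_integrable[OF sf_Mk wi2 hi mb])
      show "case_prod K \<in> borel_measurable (Mk k \<Otimes>\<^sub>M lborel)" unfolding K_def by measurable
      fix p :: "(nat \<Rightarrow> 'a) \<times> 'a"
      obtain \<xi> \<eta> where p: "p = (\<xi>, \<eta>)" by (cases p)
      have "norm (K \<xi> \<eta>) = norm (W k \<xi>) * norm (h k (- a k \<xi> - \<eta>)) * \<bar>wave_hat (s k) \<eta>\<bar>"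
        unfolding K_def by (simp add: norm_mult)
      also have "\<dots> \<le> norm (W k \<xi>) * norm (h k (- a k \<xi> - \<eta>)) * \<bar>s k\<bar>"
        by (intro mult_left_mono wave_hat_bound) auto
      also have "\<dots> = norm (complex_of_real \<bar>s k\<bar> * W k \<xi>) * norm (h k (- a k \<xi> - \<eta>))"
        by (simp add: norm_mult)
      finally show "norm (case_prod K p) \<le> norm (complex_of_real \<bar>s k\<bar> * W k (fst p)) * norm (h k (- a k (fst p) - snd p))"
        using p by simp
    qed
    have inner: "(\<integral>\<eta>. K \<xi> \<eta> \<partial>lborel) = (\<integral>\<zeta>. W k \<xi> * h k \<zeta> * complex_of_real (wave_hat (s k) (a k \<xi> + \<zeta>))
       * cis (- ((a k \<xi> + \<zeta>) \<bullet> y)) \<partial>lborel)" for \<xi>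
    proof -
      have "(\<integral>\<eta>. K \<xi> \<eta> \<partial>lborel) = (\<integral>\<zeta>. K \<xi> (- a k \<xi> - \<zeta>) \<partial>lborel)"
        by (rule integral_reflect[symmetric]) (unfold K_def, measurable)
      also have "\<dots> = (\<integral>\<zeta>. W k \<xi> * h k \<zeta> * complex_of_real (wave_hat (s k) (a k \<xi> + \<zeta>))
       * cis (- ((a k \<xi> + \<zeta>) \<bullet> y)) \<partial>lborel)"
        unfolding K_def
      proof (intro Bochner_Integration.integral_cong refl)
        fix \<zeta>
        have e1: "- a k \<xi> - (- a k \<xi> - \<zeta>) = \<zeta>" by simp
        have e2: "wave_hat (s k) (- a k \<xi> - \<zeta>) = wave_hat (s k) (a k \<xi> + \<zeta>)"
        proof -
          have "- a k \<xi> - \<zeta> = - (a k \<xi> + \<zeta>)" by simp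
          thus ?thesis using wave_hat_minus[of "s k" "a k \<xi> + \<zeta>"] by simp
        qed
        have e3: "cis ((- a k \<xi> - \<zeta>) \<bullet> y) = cis (- ((a k \<xi> + \<zeta>) \<bullet> y))"
          by (simp add: inner_diff_left inner_add_left)
        show "W k \<xi> * h k (- a k \<xi> - (- a k \<xi> - \<zeta>)) * cis ((- a k \<xi> - \<zeta>) \<bullet> y) *
              complex_of_real (wave_hat (s k) (- a k \<xi> - \<zeta>)) =
              W k \<xi> * h k \<zeta> * complex_of_real (wave_hat (s k) (a k \<xi> + \<zeta>)) * cis (- ((a k \<xi> + \<zeta>) \<bullet> y))"
          unfolding e1 e2 e3 by (simp only: mult_ac)
      qed
      finally show ?thesis .
    qed
    have "(\<integral>\<eta>. C.cv g \<eta> * complex_of_real (wave_hat (s k) \<eta>) \<partial>lborel) = (\<integral>\<eta>. (\<integral>\<xi>. K \<xi> \<eta> \<partial>Mk k) \<partial>lborel)"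
      unfolding cvexp K_def by simp
    also have "\<dots> = (\<integral>\<xi>. (\<integral>\<eta>. K \<xi> \<eta> \<partial>lborel) \<partial>Mk k)"
      by (rule P.Fubini_integral) (rule Kint)
    also have "\<dots> = Phi k y" unfolding Phi_def inner ..
    finally show ?thesis .
  qed
  have "(\<lambda>z. Psi k (y - z)) = fourier (C.cv g)" using claim1 by (rule ext)
  hence "G (\<lambda>z. Psi k (y - z)) = G (fourier (C.cv g))" by simp
  also have "\<dots> = (\<integral>\<eta>. C.cv g \<eta> * complex_of_real (wave_hat (s k) \<eta>) \<partial>lborel)" by (rule GF[OF sch])
  also have "\<dots> = Phi k y" by (rule claim3)
  finally show ?thesis .
qed

end

theorem proposition2p1:
  fixes G :: "real \<Rightarrow> ('a::euclidean_space \<Rightarrow> complex) \<Rightarrow> complex"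
    and n :: nat and tt :: "nat \<Rightarrow> real" and x :: 'a
    and h :: "nat \<Rightarrow> 'a \<Rightarrow> complex"
  assumes G_fourier: "\<And>s \<phi>. s > 0 \<Longrightarrow> schwartz \<phi> \<Longrightarrow>
              G s (fourier \<phi>) = (\<integral>\<xi>. \<phi> \<xi> * complex_of_real (wave_hat s \<xi>) \<partial>lborel)"
    and G_rapid: "\<And>s \<psi>. s > 0 \<Longrightarrow> schwartz \<psi> \<Longrightarrow> schwartz (conv_dist \<psi> (G s))"
    and n_pos: "n \<ge> 1"
    and t_pos: "0 < tt 0"
    and t_incr: "\<And>j. j < n \<Longrightarrow> tt j < tt (Suc j)"
    and h_test: "\<And>i. i < n \<Longrightarrow> test_fn (h i)"
  shows "f_pair G n tt x (\<lambda>i. fourier (h i)) =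
    (\<integral>\<xi>. (\<Prod>i<n. h i (\<xi> i)) * cis (- ((\<Sum>i<n. \<xi> i) \<bullet> x)) *
          (\<Prod>j<n. cnj (complex_of_real (wave_hat (tt (Suc j) - tt j) (\<Sum>i\<le>j. \<xi> i))))
      \<partial>(PiM {..<n} (\<lambda>_. lborel)))"
proof -
  define s where "s = (\<lambda>j. tt (Suc j) - tt j)"
  define \<phi> where "\<phi> = (\<lambda>i. fourier (h i))"
  interpret WS: wsetup h s n by unfold_locales (rule h_test)
  have s_pos: "k < n \<Longrightarrow> s k > 0" for k unfolding s_def using t_incr by simp
  have phi_eq: "conv_dist (WS.Psi k) (G (s k)) = WS.Phi k" if k: "k < n" for k
  proof
    fix y
    show "conv_dist (WS.Psi k) (G (s k)) y = WS.Phi k y"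
      unfolding conv_dist_def
      by (rule WS.stepB[OF k]) (rule G_fourier[OF s_pos[OF k]])
  qed
  have psi: "k < n \<Longrightarrow> wave_psi G \<phi> s k = WS.Psi k" for k
  proof (induction k)
    case 0 thus ?case unfolding \<phi>_def by (intro ext) (simp add: WS.Psi0)
  next
    case (Suc k)
    hence k: "k < n" by simp
    show ?case
    proof
      fix y
      have "wave_psi G \<phi> s (Suc k) y = fourier (h (Suc k)) y * WS.Phi k y"
        using Suc.IH[OF k] phi_eq[OF k] unfolding \<phi>_def by simp
      also have "\<dots> = WS.Psi (Suc k) y" by (rule WS.stepA[OF k])
      finally show "wave_psi G \<phi> s (Suc k) y = WS.Psi (Suc k) y" .
    qed
  qed
  have nk: "n - 1 < n" and sn: "Suc (n - 1) = n" using n_pos by auto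
  have "f_pair G n tt x (\<lambda>i. fourier (h i)) = WS.Phi (n - 1) x"
    unfolding f_pair_def wave_phi_def s_def[symmetric] \<phi>_def[symmetric] psi[OF nk] phi_eq[OF nk] ..
  also have "\<dots> = (\<integral>\<xi>. WS.W n \<xi> * cis (- (WS.a n \<xi> \<bullet> x)) \<partial>WS.Mk n)"
    using WS.stepC[OF nk, of x] unfolding sn .
  also have "\<dots> = (\<integral>\<xi>. (\<Prod>i<n. h i (\<xi> i)) * cis (- ((\<Sum>i<n. \<xi> i) \<bullet> x)) *
          (\<Prod>j<n. cnj (complex_of_real (wave_hat (tt (Suc j) - tt j) (\<Sum>i\<le>j. \<xi> i))))
      \<partial>(PiM {..<n} (\<lambda>_. lborel)))"
    unfolding WS.Mk_def WS.W_def WS.a_def unfolding s_def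
    by (intro Bochner_Integration.integral_cong refl) (simp only: complex_cnj_complex_of_real mult_ac)
  finally show ?thesis .
qed

end
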